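(* Let $\mathbf X$ be a design, $\lambda>0$, and $\boldsymbol\beta\in\mathbb R^p$ with fixed support $\mathcal A$, $|\mathcal A|=k$. Let $\mathcal Z_{\mathcal A}^{\pm}\subset\mathcal Z_{\mathcal A}$ be a set of $2^{k-1}$ sign vectors containing exactly one vector from each pair $\{\tilde{\boldsymbol z},-\tilde{\boldsymbol z}\}$ in $\mathcal Z_{\mathcal A}$. Then \[ \phi^{\pm}_\lambda(\mathbf X\mid\boldsymbol\beta)=2^{-(k-1)}\sum_{\tilde{\boldsymbol z}\in\mathcal Z_{\mathcal A}^{\pm}}\phi_\lambda(\mathbf X\mid\tilde{\mathbf Z}\boldsymbol\beta). \]
   Context: A design is an $n\times p$ matrix $\mathbf X$ with entries in $\{-1,+1\}$. Let $\mathbf P_1=n^{-1}\mathbf 1\mathbf 1^T$, $\mathbf V$ the diagonal matrix of the diagonal entries of $n^{-1}\mathbf X^T(\mathbf I-\mathbf P_1)\mathbf X$, $\mathbf F=(\mathbf I-\mathbf P_1)\mathbf X\mathbf V^{-1/2}$, $\mathbf C=n^{-1}\mathbf F^T\mathbf F$. For $\boldsymbol\beta$: support $\mathcal A=\{j:\beta_j\ne0\}$, complement $\mathcal I$, $\boldsymbol z=\mathrm{sign}(\boldsymbol\beta)$, $\mathbf Z_{\mathcal A}=\mathrm{Diag}(\boldsymbol z_{\mathcal A})$; subscripts denote subvectors/submatrices ($\mathbf F_{\mathcal T}$ columns, $\mathbf M_{\mathcal U\mathcal T}$ rows $\mathcal U$ and columns $\mathcal T$, $\mathbf M_{\mathcal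 T}=\mathbf M_{\mathcal T\mathcal T}$). Assume $\mathbf C_{\mathcal A}$ invertible and $\mathbf V_{\mathcal A}$ has positive diagonal. With $\mathbf P_{\mathcal A}=\mathbf F_{\mathcal A}(\mathbf F_{\mathcal A}^T\mathbf F_{\mathcal A})^{-1}\mathbf F_{\mathcal A}^T$, $\lambda_n=\lambda\sqrt n$, $\boldsymbol e\sim N(\mathbf 0,\mathbf I_n)$, $\boldsymbol u=-n^{-1/2}\mathbf Z_{\mathcal A}\mathbf C_{\mathcal A}^{-1}\mathbf F_{\mathcal A}^T\boldsymbol e+\lambda_n\mathbf Z_{\mathcal A}\mathbf C_{\mathcal A}^{-1}\boldsymbol z_{\mathcal A}$, $\boldsymbol v=n^{-1/2}\mathbf F_{\mathcal I}^T(\mathbf I-\mathbf P_{\mathcal A})\boldsymbol e+\lambda_n\mathbf C_{\mathcal I\mathcal A}\mathbf C_{\mathcal A}^{-1}\boldsymbol z_{\mathcal A}$, define $S_\lambda=\{\boldsymbol u<\sqrt n\mathbf Z_{\mathcal A}\mathbf V_{\mathcal A}^{1/2}\boldsymbol\beta_{\mathcal A}\}$, $I_\lambda=\{|\boldsymbol v|\le\lambda_n\mathbf 1\}$ (componentwise) and $\phi_\lambda(\mathbf X\mid\boldsymbol\beta)=P(S_\lambda\cap I_\lambda)$. Let $\mathcal Z_{\mathcal A}$ be the set of the $2^k$ vectors $\tilde{\boldsymbol z}\in\{-1,0,1\}^p$ with $\tilde z_j=0$ for $j\in\mathcal I$ and $\tilde z_j\in\{-1,1\}$ for $j\in\mathcal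 A$; for such $\tilde{\boldsymbol z}$ let $\tilde{\mathbf Z}$ be the $p\times p$ diagonal matrix with entries $\tilde z_j$ for $j\in\mathcal A$ and $1$ for $j\in\mathcal I$. The sign-averaged criterion is $\phi^{\pm}_\lambda(\mathbf X\mid\boldsymbol\beta)=2^{-k}\sum_{\tilde{\boldsymbol z}\in\mathcal Z_{\mathcal A}}\phi_\lambda(\mathbf X\mid\tilde{\mathbf Z}\boldsymbol\beta)$. *)

theory Defs
  imports "HOL-Probability.Probability"
begin

text \<open>Matrices and vectors are represented as functions on natural-number indices:
  an n x p design is X :: nat => nat => real with rows i < n and columns j < p;
  vectors in R^p are nat => real, entries j < p being relevant.\<close>

definition design :: "nat \<Rightarrow> nat \<Rightarrow> (nat \<Rightarrow> nat \<Rightarrow> real) \<Rightarrow> bool" where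
  "design n p X \<longleftrightarrow> (\<forall>i<n. \<forall>j<p. X i j \<in> {-1, 1})"

text \<open>Column means, i.e. the entries of P_1 X.\<close>
definition colmean :: "nat \<Rightarrow> (nat \<Rightarrow> nat \<Rightarrow> real) \<Rightarrow> nat \<Rightarrow> real" where
  "colmean n X j = (\<Sum>i<n. X i j) / real n"

text \<open>Diagonal entries of V = diag(n^{-1} X^T (I - P_1) X).\<close>
definition Vdiag :: "nat \<Rightarrow> (nat \<Rightarrow> nat \<Rightarrow> real) \<Rightarrow> nat \<Rightarrow> real" where
  "Vdiag n X j = (\<Sum>i<n. X i j * (X i j - colmean n X j)) / real n"

text \<open>F = (I - P_1) X V^{-1/2}.\<close>
definition Fmat :: "nat \<Rightarrow> (nat \<Rightarrow> nat \<Rightarrow> real) \<Rightarrow> nat \<Rightarrow> nat \<Rightarrow> real" where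
  "Fmat n X i j = (X i j - colmean n X j) / sqrt (Vdiag n X j)"

definition Cmat :: "nat \<Rightarrow> (nat \<Rightarrow> nat \<Rightarrow> real) \<Rightarrow> nat \<Rightarrow> nat \<Rightarrow> real" where
  "Cmat n X j l = (\<Sum>i<n. Fmat n X i j * Fmat n X i l) / real n"

text \<open>Invertibility of the principal submatrix M_T (T a finite index set) and its inverse
  (as a function on T x T, zero outside).\<close>
definition is_inverse_on :: "nat set \<Rightarrow> (nat \<Rightarrow> nat \<Rightarrow> real) \<Rightarrow> (nat \<Rightarrow> nat \<Rightarrow> real) \<Rightarrow> bool" where
  "is_inverse_on T M G \<longleftrightarrow>
     (\<forall>j\<in>T. \<forall>l\<in>T. (\<Sum>m\<in>T. G j m * M m l) = (if j = l then 1 else 0)) \<and>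
     (\<forall>j\<in>T. \<forall>l\<in>T. (\<Sum>m\<in>T. M j m * G m l) = (if j = l then 1 else 0)) \<and>
     (\<forall>j l. j \<notin> T \<or> l \<notin> T \<longrightarrow> G j l = 0)"

definition invertible_on :: "nat set \<Rightarrow> (nat \<Rightarrow> nat \<Rightarrow> real) \<Rightarrow> bool" where
  "invertible_on T M \<longleftrightarrow> (\<exists>G. is_inverse_on T M G)"

definition inv_on :: "nat set \<Rightarrow> (nat \<Rightarrow> nat \<Rightarrow> real) \<Rightarrow> nat \<Rightarrow> nat \<Rightarrow> real" where
  "inv_on T M = (THE G. is_inverse_on T M G)"

definition supp :: "nat \<Rightarrow> (nat \<Rightarrow> real) \<Rightarrow> nat set" where
  "supp p \<beta> = {j. j < p \<and> \<beta> j \<noteq> 0}"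

definition nsupp :: "nat \<Rightarrow> (nat \<Rightarrow> real) \<Rightarrow> nat set" where
  "nsupp p \<beta> = {j. j < p \<and> \<beta> j = 0}"

definition gauss :: "nat \<Rightarrow> (nat \<Rightarrow> real) measure" where
  "gauss n = PiM {..<n} (\<lambda>_. density lborel std_normal_density)"

text \<open>(I - P_A) e, where P_A = F_A (F_A^T F_A)^{-1} F_A^T = n^{-1} F_A C_A^{-1} F_A^T.\<close>
definition resid :: "nat \<Rightarrow> (nat \<Rightarrow> nat \<Rightarrow> real) \<Rightarrow> nat set \<Rightarrow> (nat \<Rightarrow> real) \<Rightarrow> nat \<Rightarrow> real" where
  "resid n X A e i = e i - (\<Sum>a\<in>A. \<Sum>b\<in>A. Fmat n X i a * inv_on A (Cmat n X) a b *
        (\<Sum>i'<n. Fmat n X i' b * e i')) / real n"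

definition uvec :: "nat \<Rightarrow> nat \<Rightarrow> (nat \<Rightarrow> nat \<Rightarrow> real) \<Rightarrow> real \<Rightarrow> (nat \<Rightarrow> real) \<Rightarrow> (nat \<Rightarrow> real) \<Rightarrow> nat \<Rightarrow> real" where
  "uvec n p X lam \<beta> e j =
     (let A = supp p \<beta>; z = (\<lambda>m. sgn (\<beta> m)); Ci = inv_on A (Cmat n X) in
      - (1 / sqrt (real n)) * z j * (\<Sum>m\<in>A. Ci j m * (\<Sum>i<n. Fmat n X i m * e i))
      + lam * sqrt (real n) * z j * (\<Sum>m\<in>A. Ci j m * z m))"

definition vvec :: "nat \<Rightarrow> nat \<Rightarrow> (nat \<Rightarrow> nat \<Rightarrow> real) \<Rightarrow> real \<Rightarrow> (nat \<Rightarrow> real) \<Rightarrow> (nat \<Rightarrow> real) \<Rightarrow> nat \<Rightarrow> real" where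
  "vvec n p X lam \<beta> e j =
     (let A = supp p \<beta>; z = (\<lambda>m. sgn (\<beta> m)); Ci = inv_on A (Cmat n X) in
      (1 / sqrt (real n)) * (\<Sum>i<n. Fmat n X i j * resid n X A e i)
      + lam * sqrt (real n) * (\<Sum>m\<in>A. Cmat n X j m * (\<Sum>l\<in>A. Ci m l * z l)))"

definition phi :: "nat \<Rightarrow> nat \<Rightarrow> (nat \<Rightarrow> nat \<Rightarrow> real) \<Rightarrow> real \<Rightarrow> (nat \<Rightarrow> real) \<Rightarrow> real" where
  "phi n p X lam \<beta> = measure (gauss n)
     {e \<in> space (gauss n).
        (\<forall>j\<in>supp p \<beta>. uvec n p X lam \<beta> e j
              < sqrt (real n) * sgn (\<beta> j) * sqrt (Vdiag n X j) * \<beta> j) \<and>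
        (\<forall>j\<in>nsupp p \<beta>. \<bar>vvec n p X lam \<beta> e j\<bar> \<le> lam * sqrt (real n))}"

definition signvecs :: "nat \<Rightarrow> (nat \<Rightarrow> real) \<Rightarrow> (nat \<Rightarrow> real) set" where
  "signvecs p \<beta> = {z. \<forall>j. (j \<in> supp p \<beta> \<longrightarrow> z j \<in> {-1, 1}) \<and> (j \<notin> supp p \<beta> \<longrightarrow> z j = 0)}"

text \<open>tilde Z beta: diagonal matrix with z_j on A and 1 on I, applied to beta.\<close>
definition signflip :: "nat \<Rightarrow> (nat \<Rightarrow> real) \<Rightarrow> (nat \<Rightarrow> real) \<Rightarrow> nat \<Rightarrow> real" where
  "signflip p \<beta> z j = (if j \<in> supp p \<beta> then z j else 1) * \<beta> j"

definition phi_pm :: "nat \<Rightarrow> nat \<Rightarrow> (nat \<Rightarrow> nat \<Rightarrow> real) \<Rightarrow> real \<Rightarrow> (nat \<Rightarrow> real) \<Rightarrow> real" where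
  "phi_pm n p X lam \<beta> = (1 / 2 ^ card (supp p \<beta>)) *
      (\<Sum>z\<in>signvecs p \<beta>. phi n p X lam (signflip p \<beta> z))"

end

theory Submission imports Defs begin
lemma std_sym: "distr (density lborel std_normal_density) lborel uminus = density lborel std_normal_density"
proof -
  have "distr (density (distr lborel lborel uminus) std_normal_density) lborel uminus = density lborel ((\<lambda>x. ennreal (std_normal_density x)) \<circ> uminus)"
    by (rule distr_density_distr) auto
  moreover have "distr lborel lborel (uminus::real\<Rightarrow>real) = lborel"
    using lborel_distr_uminus by (metis distr_cong sets_lborel)
  moreover have "((\<lambda>x. ennreal (std_normal_density x)) \<circ> uminus) = (\<lambda>x. ennreal (std_normal_density x))"
    by (auto simp: fun_eq_iff normal_density_def)
  ultimately show ?thesis by simp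
qed

definition negv :: "nat \<Rightarrow> (nat \<Rightarrow> real) \<Rightarrow> nat \<Rightarrow> real" where
  "negv n e = (\<lambda>i\<in>{..<n}. - e i)"

lemma negv_meas: "negv n \<in> measurable (gauss n) (gauss n)"
  unfolding negv_def gauss_def by measurable

lemma gauss_sym: "distr (gauss n) (gauss n) (negv n) = gauss n"
proof -
  have "distr (gauss n) (gauss n) (compose {..<n} uminus) = PiM {..<n} (\<lambda>i. distr (density lborel std_normal_density) (density lborel std_normal_density) uminus)"
    unfolding gauss_def
    by (rule distr_PiM_finite_prob_space') (auto intro: prob_space_normal_density)
  moreover have "compose {..<n} uminus = negv n"
    by (auto simp: compose_def negv_def fun_eq_iff)
  moreover have "distr (density lborel std_normal_density) (density lborel std_normal_density) uminus = density lborel std_normal_density"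
    using std_sym by (metis distr_cong sets_density)
  ultimately show ?thesis by (simp add: gauss_def)
qed

lemma measure_negv:
  assumes "S \<subseteq> space (gauss n)"
  shows "measure (gauss n) (negv n -` S \<inter> space (gauss n)) = measure (gauss n) S"
proof (cases "S \<in> sets (gauss n)")
  case True
  then show ?thesis using measure_distr[OF negv_meas True, symmetric] gauss_sym by simp
next
  case False
  have inv: "negv n -` (negv n -` S \<inter> space (gauss n)) \<inter> space (gauss n) = S"
  proof -
    have sp: "e \<in> space (gauss n) \<Longrightarrow> negv n (negv n e) = e" for e
      by (auto simp: negv_def gauss_def space_PiM fun_eq_iff PiE_def extensional_def)
    have "negv n e \<in> space (gauss n)" if "e \<in> space (gauss n)" for e
      by (rule measurable_space[OF negv_meas that])
    then show ?thesis using sp assms by force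
  qed
  have "negv n -` S \<inter> space (gauss n) \<notin> sets (gauss n)"
  proof
    assume "negv n -` S \<inter> space (gauss n) \<in> sets (gauss n)"
    then have "negv n -` (negv n -` S \<inter> space (gauss n)) \<inter> space (gauss n) \<in> sets (gauss n)"
      by (rule measurable_sets[OF negv_meas])
    with inv False show False by simp
  qed
  with False show ?thesis by (simp add: measure_notin_sets)
qed

lemma sumF_neg: "(\<Sum>i<n. f i * negv n e i) = - (\<Sum>i<n. f i * e i)"
  by (simp add: negv_def sum_negf)

lemma resid_neg: "i < n \<Longrightarrow> resid n X A (negv n e) i = - resid n X A e i"
  unfolding resid_def by (simp add: sumF_neg negv_def sum_negf sum_divide_distrib[symmetric])

lemma supp_neg: "\<forall>j<p. \<beta>' j = - \<beta> j \<Longrightarrow> supp p \<beta>' = supp p \<beta>"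
  by (auto simp: supp_def)
lemma nsupp_neg: "\<forall>j<p. \<beta>' j = - \<beta> j \<Longrightarrow> nsupp p \<beta>' = nsupp p \<beta>"
  by (auto simp: nsupp_def)

lemma uvec_neg:
  assumes "\<forall>j<p. \<beta>' j = - \<beta> j" "j \<in> supp p \<beta>"
  shows "uvec n p X lam \<beta>' e j = uvec n p X lam \<beta> (negv n e) j"
proof -
  have A: "supp p \<beta>' = supp p \<beta>" using supp_neg[OF assms(1)] .
  have z: "\<And>m. m \<in> supp p \<beta> \<Longrightarrow> sgn (\<beta>' m) = - sgn (\<beta> m)"
    using assms(1) by (auto simp: supp_def)
  have zj: "sgn (\<beta>' j) = - sgn (\<beta> j)" using z assms(2) .
  have s1: "(\<Sum>m\<in>supp p \<beta>. G j m * sgn (\<beta>' m)) = - (\<Sum>m\<in>supp p \<beta>. G j m * sgn (\<beta> m))" for G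
    by (simp add: z sum_negf)
  show ?thesis unfolding uvec_def Let_def A
    by (simp add: s1 zj sumF_neg sum_negf)
qed

lemma vvec_neg:
  assumes "\<forall>j<p. \<beta>' j = - \<beta> j"
  shows "vvec n p X lam \<beta>' e j = - vvec n p X lam \<beta> (negv n e) j"
proof -
  have A: "supp p \<beta>' = supp p \<beta>" using supp_neg[OF assms(1)] .
  have z: "\<And>m. m \<in> supp p \<beta> \<Longrightarrow> sgn (\<beta>' m) = - sgn (\<beta> m)"
    using assms(1) by (auto simp: supp_def)
  have s1: "(\<Sum>l\<in>supp p \<beta>. G l * sgn (\<beta>' l)) = - (\<Sum>l\<in>supp p \<beta>. G l * sgn (\<beta> l))" for G
    by (simp add: z sum_negf)
  have s2: "(\<Sum>i<n. F i * resid n X B (negv n e) i) = - (\<Sum>i<n. F i * resid n X B e i)" for F B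
    by (simp add: resid_neg sum_negf)
  show ?thesis unfolding vvec_def Let_def A
    apply (simp only: s1 s2)
    by (simp add: sum_negf algebra_simps)
qed

definition Sset where
  "Sset n p X lam \<beta> = {e \<in> space (gauss n).
        (\<forall>j\<in>supp p \<beta>. uvec n p X lam \<beta> e j
              < sqrt (real n) * sgn (\<beta> j) * sqrt (Vdiag n X j) * \<beta> j) \<and>
        (\<forall>j\<in>nsupp p \<beta>. \<bar>vvec n p X lam \<beta> e j\<bar> \<le> lam * sqrt (real n))}"

lemma phi_neg:
  assumes "\<forall>j<p. \<beta>' j = - \<beta> j"
  shows "phi n p X lam \<beta>' = phi n p X lam \<beta>"
proof -
  have sp: "negv n e \<in> space (gauss n)" if "e \<in> space (gauss n)" for e
    by (rule measurable_space[OF negv_meas that])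
  have rhs: "j \<in> supp p \<beta> \<Longrightarrow> sqrt (real n) * sgn (\<beta>' j) * sqrt (Vdiag n X j) * \<beta>' j = sqrt (real n) * sgn (\<beta> j) * sqrt (Vdiag n X j) * \<beta> j" for j
    using assms by (auto simp: supp_def)
  have "Sset n p X lam \<beta>' = negv n -` Sset n p X lam \<beta> \<inter> space (gauss n)"
    unfolding Sset_def supp_neg[OF assms] nsupp_neg[OF assms]
    by (auto simp add: sp uvec_neg[OF assms] vvec_neg[OF assms] rhs simp del: mult_cancel_left)
  then have "measure (gauss n) (Sset n p X lam \<beta>') = measure (gauss n) (Sset n p X lam \<beta>)"
    using measure_negv[of "Sset n p X lam \<beta>" n] by (simp add: Sset_def)
  then show ?thesis by (simp add: phi_def Sset_def)
qed
lemma signflip_neg: "\<forall>j<p. signflip p \<beta> (\<lambda>j. - z j) j = - signflip p \<beta> z j"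
  by (auto simp: signflip_def supp_def)

theorem corollary1:
  fixes n p :: nat and X :: "nat \<Rightarrow> nat \<Rightarrow> real" and lam :: real and \<beta> :: "nat \<Rightarrow> real"
    and Zpm :: "(nat \<Rightarrow> real) set"
  assumes "design n p X"
    and "lam > 0"
    and "invertible_on (supp p \<beta>) (Cmat n X)"
    and "\<forall>j\<in>supp p \<beta>. Vdiag n X j > 0"
    and "Zpm \<subseteq> signvecs p \<beta>"
    and "card Zpm = 2 ^ (card (supp p \<beta>) - 1)"
    and "\<forall>z\<in>signvecs p \<beta>. (z \<in> Zpm) \<noteq> ((\<lambda>j. - z j) \<in> Zpm)"
  shows "phi_pm n p X lam \<beta> =
           (1 / 2 ^ (card (supp p \<beta>) - 1)) * (\<Sum>z\<in>Zpm. phi n p X lam (signflip p \<beta> z))"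
proof -
  define A where "A = supp p \<beta>"
  define S where "S = signvecs p \<beta>"
  define ng where "ng = (\<lambda>z::nat\<Rightarrow>real. \<lambda>j. - z j)"
  define f where "f = (\<lambda>z. phi n p X lam (signflip p \<beta> z))"
  note a5 = assms(5)[folded S_def] and a7 = assms(7)[folded S_def ng_def]
  have ngng: "ng (ng z) = z" for z by (simp add: ng_def)
  have ngS: "z \<in> S \<Longrightarrow> ng z \<in> S" for z by (auto simp: S_def signvecs_def ng_def)
  have finA: "finite A" unfolding A_def supp_def by auto
  have k: "card A \<ge> 1"
  proof (rule ccontr)
    assume "\<not> card A \<ge> 1"
    then have "card A = 0" by simp
    then have "A = {}" using finA card_0_eq by blast
    then have "(\<lambda>_. 0::real) \<in> S" by (auto simp: S_def signvecs_def A_def)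
    moreover have "ng (\<lambda>_. 0::real) = (\<lambda>_. 0)" by (simp add: ng_def)
    ultimately show False using bspec[OF a7, of "\<lambda>_. 0"] by simp
  qed
  have finZ: "finite Zpm" using assms(6) card.infinite by fastforce
  have Seq: "S = Zpm \<union> ng ` Zpm"
  proof
    show "S \<subseteq> Zpm \<union> ng ` Zpm"
    proof
      fix z assume z: "z \<in> S"
      show "z \<in> Zpm \<union> ng ` Zpm"
      proof (cases "z \<in> Zpm")
        case False
        then have "ng z \<in> Zpm" using bspec[OF a7 z] by (simp add: ng_def)
        then show ?thesis using ngng[of z] by (metis UnI2 image_eqI)
      qed simp
    qed
    show "Zpm \<union> ng ` Zpm \<subseteq> S" using a5 ngS by auto
  qed
  have disj: "Zpm \<inter> ng ` Zpm = {}"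
  proof (rule ccontr)
    assume "Zpm \<inter> ng ` Zpm \<noteq> {}"
    then obtain w where w: "w \<in> Zpm" "ng w \<in> Zpm" by auto
    then have "w \<in> S" using a5 by auto
    then show False using bspec[OF a7, of w] w by (simp add: ng_def)
  qed
  have inj: "inj_on ng Zpm" by (metis inj_onI ngng)
  have "sum f S = sum f Zpm + sum f (ng ` Zpm)"
    unfolding Seq by (rule sum.union_disjoint) (use finZ disj in auto)
  also have "sum f (ng ` Zpm) = sum (f \<circ> ng) Zpm" by (rule sum.reindex[OF inj])
  also have "sum (f \<circ> ng) Zpm = sum f Zpm"
    by (rule sum.cong) (auto simp: f_def ng_def intro!: phi_neg signflip_neg)
  finally have "sum f S = 2 * sum f Zpm" by simp
  moreover have "(2::real) ^ card A = 2 * 2 ^ (card A - 1)"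
    using k by (metis Suc_diff_le diff_Suc_1 power_Suc)
  moreover have "phi_pm n p X lam \<beta> = 1 / 2 ^ card A * sum f S"
    by (simp add: phi_pm_def A_def S_def f_def)
  moreover have "(\<Sum>z\<in>Zpm. phi n p X lam (signflip p \<beta> z)) = sum f Zpm"
    by (simp add: f_def)
  ultimately show ?thesis by (simp add: A_def)
qed
end
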